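(* Let $\Gamma$ be an infinite set. Then the pair $(\ell^\infty(\Gamma),c_0(\Gamma))$ has the compact quotient lifting property (CQLP) but does not have the quotient lifting property (QLP).
   Context: For a Banach space $X$ and a closed subspace $J\subset X$, let $\pi:X\to X/J$ be the quotient map. The pair $(X,J)$ has the quotient lifting property (QLP) if for every Banach space $Y$ and every bounded linear operator $S:Y\to X/J$ there is a bounded linear operator $T:Y\to X$ with $\pi\circ T=S$ and $\|T\|=\|S\|$. The pair $(X,J)$ has the compact quotient lifting property (CQLP) if for every Banach space $Z$ and every compact linear operator $T:Z\to X/J$ there is a compact linear operator $S:Z\to X$ with $\pi\circ S=T$ and $\|S\|=\|T\|$. *)

theory Defs
  imports "HOL-Analysis.Analysis" "HOL-Probability.Discrete_Topology"
begin

text \<open>ell-infinity(Gamma) is modelled as the bounded (automatically continuous)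
 real functions on the discrete copy of the index type 'g, with the sup norm.\<close>

type_synonym 'g linf = "'g discrete \<Rightarrow>\<^sub>C real"

definition c0 :: "'g linf set" where
  "c0 = {f. \<forall>e>0. finite {x. e \<le> \<bar>apply_bcontfun f x\<bar>}}"

definition compact_operator :: "('a::real_normed_vector \<Rightarrow> 'b::real_normed_vector) \<Rightarrow> bool" where
  "compact_operator T \<longleftrightarrow> bounded_linear T \<and> compact (closure (T ` ball 0 1))"

text \<open>Lifting properties relative to a quotient map pi : X -> X/J, with the
 Banach space Y (resp. Z) ranging over the type given as first argument.\<close>

definition QLP :: "'y::banach itself \<Rightarrow> ('x::real_normed_vector \<Rightarrow> 'q::real_normed_vector) \<Rightarrow> bool" where
  "QLP _ \<pi> \<longleftrightarrow> (\<forall>S::'y \<Rightarrow> 'q. bounded_linear S \<longrightarrow>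
      (\<exists>T::'y \<Rightarrow> 'x. bounded_linear T \<and> \<pi> \<circ> T = S \<and> onorm T = onorm S))"

definition CQLP :: "'z::banach itself \<Rightarrow> ('x::real_normed_vector \<Rightarrow> 'q::real_normed_vector) \<Rightarrow> bool" where
  "CQLP _ \<pi> \<longleftrightarrow> (\<forall>T::'z \<Rightarrow> 'q. compact_operator T \<longrightarrow>
      (\<exists>S::'z \<Rightarrow> 'x. compact_operator S \<and> \<pi> \<circ> S = T \<and> onorm S = onorm T))"

end

theory Submission
  imports Defs
begin


definition fip :: "'a set set \<Rightarrow> bool" where
  "fip \<F> \<longleftrightarrow> (\<forall>G. G \<subseteq> \<F> \<longrightarrow> finite G \<longrightarrow> infinite (\<Inter>G))"

lemma fip_mono: "fip \<F> \<Longrightarrow> \<G> \<subseteq> \<F> \<Longrightarrow> fip \<G>"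
  unfolding fip_def by blast

lemma fip_insert:
  assumes "fip \<F>" "\<And>G. G \<subseteq> \<F> \<Longrightarrow> finite G \<Longrightarrow> infinite (X \<inter> \<Inter>G)"
  shows "fip (insert X \<F>)"
  unfolding fip_def
proof (intro allI impI)
  fix G assume G: "G \<subseteq> insert X \<F>" "finite G"
  show "infinite (\<Inter>G)"
  proof (cases "X \<in> G")
    case True
    have "\<Inter>G = X \<inter> \<Inter>(G - {X})" using True by blast
    moreover have "infinite (X \<inter> \<Inter>(G - {X}))" using G by (intro assms(2)) auto
    ultimately show ?thesis by simp
  next
    case False
    then show ?thesis using G assms(1) unfolding fip_def by blast
  qed
qed

lemma fip_maximal_exists:
  assumes "fip \<A>"
  shows "\<exists>\<F>. \<A> \<subseteq> \<F> \<and> fip \<F> \<and> (\<forall>\<G>. \<F> \<subseteq> \<G> \<and> fip \<G> \<longrightarrow> \<G> = \<F>)"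
proof -
  let ?M = "{\<F>. \<A> \<subseteq> \<F> \<and> fip \<F>}"
  have "\<exists>\<F>\<in>?M. \<forall>\<G>\<in>?M. \<F> \<subseteq> \<G> \<longrightarrow> \<G> = \<F>"
  proof (rule Zorn_Lemma2, intro ballI)
    fix C assume C: "C \<in> chains ?M"
    show "\<exists>U\<in>?M. \<forall>X\<in>C. X \<subseteq> U"
    proof (cases "C = {}")
      case True
      show ?thesis
      proof (rule bexI[of _ \<A>])
        show "\<forall>X\<in>C. X \<subseteq> \<A>" using True by simp
        show "\<A> \<in> ?M" using assms by simp
      qed
    next
      case False
      have "fip (\<Union>C)"
        unfolding fip_def
      proof (intro allI impI)
        fix G assume G: "G \<subseteq> \<Union>C" "finite G"
        have "\<exists>X\<in>C. G \<subseteq> X"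
          using G(2,1)
        proof (induction G rule: finite_induct)
          case empty then show ?case using False by auto
        next
          case (insert x F)
          then obtain X where X: "X \<in> C" "F \<subseteq> X" by auto
          obtain Y where Y: "Y \<in> C" "x \<in> Y" using insert by auto
          have "X \<subseteq> Y \<or> Y \<subseteq> X" using C X(1) Y(1) unfolding chains_def chain_subset_def by blast
          then show ?case using X Y by blast
        qed
        then obtain X where X: "X \<in> C" "G \<subseteq> X" by blast
        have "fip X" using X(1) C unfolding chains_def by auto
        then show "infinite (\<Inter>G)" using X(2) G(2) unfolding fip_def by blast
      qed
      moreover have "\<A> \<subseteq> \<Union>C" using False C unfolding chains_def by blast
      ultimately show ?thesis by blast
    qed
  qed
  then obtain \<F> where F1: "\<F> \<in> ?M" and F2: "\<forall>\<G>\<in>?M. \<F> \<subseteq> \<G> \<longrightarrow> \<G> = \<F>"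
    by (elim bexE)
  show ?thesis
  proof (intro exI[of _ \<F>] conjI allI impI)
    show "\<A> \<subseteq> \<F>" "fip \<F>" using F1 by auto
    fix \<G> assume "\<F> \<subseteq> \<G> \<and> fip \<G>"
    then show "\<G> = \<F>" using F2 \<open>\<A> \<subseteq> \<F>\<close> by auto
  qed
qed

lemma fip_ultra:
  assumes inf: "infinite (UNIV :: 'a set)" and "fip (\<A> :: 'a set set)"
  shows "\<exists>U::'a filter. (\<forall>P. eventually P U \<longrightarrow> infinite {x. P x}) \<and>
           (\<forall>A. eventually (\<lambda>x. x \<in> A) U \<or> eventually (\<lambda>x. x \<notin> A) U) \<and>
           (\<forall>A\<in>\<A>. eventually (\<lambda>x. x \<in> A) U)"
proof -
  from fip_maximal_exists[OF assms(2)] obtain \<F> where F: "\<A> \<subseteq> \<F>" "fip \<F>"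
    and max0: "\<forall>\<G>. \<F> \<subseteq> \<G> \<and> fip \<G> \<longrightarrow> \<G> = \<F>"
    by (elim exE conjE)
  have max: "\<G> = \<F>" if "\<F> \<subseteq> \<G>" "fip \<G>" for \<G> using max0 that by blast
  have addI: "X \<in> \<F>" if "\<And>G. G \<subseteq> \<F> \<Longrightarrow> finite G \<Longrightarrow> infinite (X \<inter> \<Inter>G)" for X
  proof -
    have "fip (insert X \<F>)" by (rule fip_insert[OF F(2) that])
    then have "insert X \<F> = \<F>" by (intro max) auto
    then show ?thesis by blast
  qed
  have inter_inf: "infinite (\<Inter>G)" if "G \<subseteq> \<F>" "finite G" for G
    using F(2) that unfolding fip_def by blast
  have UNIV_in: "UNIV \<in> \<F>" by (rule addI) (simp add: inter_inf)
  have Int_in: "A \<inter> B \<in> \<F>" if "A \<in> \<F>" "B \<in> \<F>" for A B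
  proof (rule addI)
    fix G assume "G \<subseteq> \<F>" "finite G"
    then have "infinite (\<Inter>(insert A (insert B G)))" using that by (intro inter_inf) auto
    then show "infinite (A \<inter> B \<inter> \<Inter>G)" by (simp add: Int_assoc)
  qed
  have mono_in: "B \<in> \<F>" if "A \<in> \<F>" "A \<subseteq> B" for A B
  proof (rule addI)
    fix G assume "G \<subseteq> \<F>" "finite G"
    then have "infinite (\<Inter>(insert A G))" using that by (intro inter_inf) auto
    then have "infinite (A \<inter> \<Inter>G)" by simp
    moreover have "A \<inter> \<Inter>G \<subseteq> B \<inter> \<Inter>G" using that(2) by blast
    ultimately show "infinite (B \<inter> \<Inter>G)" using finite_subset by blast
  qed
  have inf_in: "infinite A" if "A \<in> \<F>" for A
    using inter_inf[of "{A}"] that by auto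
  have ultra: "A \<in> \<F> \<or> -A \<in> \<F>" for A
  proof (rule ccontr)
    assume na: "\<not> (A \<in> \<F> \<or> -A \<in> \<F>)"
    have "\<not> (\<forall>G. G \<subseteq> \<F> \<longrightarrow> finite G \<longrightarrow> infinite (A \<inter> \<Inter>G))"
      using addI[of A] na by blast
    then obtain G1 where G1: "G1 \<subseteq> \<F>" "finite G1" "finite (A \<inter> \<Inter>G1)" by blast
    have "\<not> (\<forall>G. G \<subseteq> \<F> \<longrightarrow> finite G \<longrightarrow> infinite (-A \<inter> \<Inter>G))"
      using addI[of "-A"] na by blast
    then obtain G2 where G2: "G2 \<subseteq> \<F>" "finite G2" "finite (-A \<inter> \<Inter>G2)" by blast
    have "\<Inter>(G1 \<union> G2) \<subseteq> (A \<inter> \<Inter>G1) \<union> (-A \<inter> \<Inter>G2)" by blast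
    then have "finite (\<Inter>(G1 \<union> G2))" using G1 G2 by (meson finite_UnI finite_subset)
    moreover have "infinite (\<Inter>(G1 \<union> G2))" using G1 G2 by (intro inter_inf) auto
    ultimately show False by blast
  qed
  define U where "U = Abs_filter (\<lambda>P. {x. P x} \<in> \<F>)"
  have "is_filter (\<lambda>P. {x. P x} \<in> \<F>)"
  proof
    show "{x. True} \<in> \<F>" using UNIV_in by simp
    fix P Q
    show "{x. P x} \<in> \<F> \<Longrightarrow> {x. Q x} \<in> \<F> \<Longrightarrow> {x. P x \<and> Q x} \<in> \<F>"
      using Int_in[of "{x. P x}" "{x. Q x}"] by (simp add: Collect_conj_eq)
    show "\<forall>x. P x \<longrightarrow> Q x \<Longrightarrow> {x. P x} \<in> \<F> \<Longrightarrow> {x. Q x} \<in> \<F>"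
      using mono_in[of "{x. P x}" "{x. Q x}"] by blast
  qed
  then have ev: "eventually P U \<longleftrightarrow> {x. P x} \<in> \<F>" for P
    unfolding U_def by (simp add: eventually_Abs_filter)
  show ?thesis
  proof (intro exI conjI allI impI ballI)
    show "infinite {x. P x}" if "eventually P U" for P using that ev inf_in by blast
    show "eventually (\<lambda>x. x \<in> A) U \<or> eventually (\<lambda>x. x \<notin> A) U" for A
      using ultra[of A] by (simp add: ev Compl_eq)
    show "eventually (\<lambda>x. x \<in> A) U" if "A \<in> \<A>" for A using that F(1) by (simp add: ev subset_iff)
  qed
qed



section \<open>Ultrafilter limits\<close>

definition ufree :: "'a filter \<Rightarrow> bool" where
  "ufree U \<longleftrightarrow> (\<forall>P. eventually P U \<longrightarrow> infinite {x. P x}) \<and>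
           (\<forall>A. eventually (\<lambda>x. x \<in> A) U \<or> eventually (\<lambda>x. x \<notin> A) U)"

lemma ufree_exists:
  assumes "infinite (UNIV :: 'a set)" "fip (\<A> :: 'a set set)"
  shows "\<exists>U. ufree U \<and> (\<forall>A\<in>\<A>. eventually (\<lambda>x. x \<in> A) U)"
  using fip_ultra[OF assms] unfolding ufree_def by blast

lemma ufree_infinite: "ufree U \<Longrightarrow> eventually P U \<Longrightarrow> infinite {x. P x}"
  unfolding ufree_def by blast

lemma ufree_nonbot: "ufree U \<Longrightarrow> U \<noteq> bot"
proof
  assume "ufree U" "U = bot"
  then have "infinite {x. False}" using ufree_infinite[of U "\<lambda>x. False"] by simp
  then show False by simp
qed

lemma ufree_ultra: "ufree U \<Longrightarrow> eventually (\<lambda>x. x \<in> A) U \<or> eventually (\<lambda>x. x \<notin> A) U"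
  unfolding ufree_def by blast

lemma ufree_finite: 
  assumes "ufree U" "finite A" shows "eventually (\<lambda>x. x \<notin> A) U"
proof -
  have "\<not> eventually (\<lambda>x. x \<in> A) U"
    using ufree_infinite[OF assms(1), of "\<lambda>x. x \<in> A"] assms(2) by auto
  then show ?thesis using ufree_ultra[OF assms(1)] by blast
qed

lemma ufree_tendsto:
  fixes h :: "'a \<Rightarrow> real"
  assumes U: "ufree U" and b: "bounded (range h)"
  shows "(h \<longlongrightarrow> Lim U h) U"
proof -
  obtain B where B: "\<And>x. \<bar>h x\<bar> \<le> B" using b unfolding bounded_iff by auto
  let ?F = "filtermap h U"
  have "compact (cball (0::real) B)" by simp
  moreover have "?F \<noteq> bot" using ufree_nonbot[OF U] by (simp add: filtermap_bot_iff)
  moreover have "eventually (\<lambda>y. y \<in> cball 0 B) ?F"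
    using B by (simp add: eventually_filtermap)
  ultimately obtain l where l: "inf (nhds l) ?F \<noteq> bot"
    unfolding compact_filter by blast
  have "(h \<longlongrightarrow> l) U"
    unfolding tendsto_def
  proof (intro allI impI)
    fix S assume S: "open S" "l \<in> S"
    show "eventually (\<lambda>x. h x \<in> S) U"
    proof (rule ccontr)
      assume "\<not> eventually (\<lambda>x. h x \<in> S) U"
      then have "eventually (\<lambda>x. x \<in> h -` (-S)) U"
        using ufree_ultra[OF U, of "h -` S"] by auto
      then have e1: "eventually (\<lambda>y. y \<notin> S) ?F" by (simp add: eventually_filtermap)
      have e2: "eventually (\<lambda>y. y \<in> S) (nhds l)" using S by (rule eventually_nhds_in_open)
      have "eventually (\<lambda>y. False) (inf (nhds l) ?F)"
        unfolding eventually_inf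
        by (rule exI[of _ "\<lambda>y. y \<in> S"], rule exI[of _ "\<lambda>y. y \<notin> S"]) (use e1 e2 in auto)
      then show False using l by (simp add: trivial_limit_def)
    qed
  qed
  moreover have "U \<noteq> bot" using ufree_nonbot[OF U] .
  ultimately show ?thesis using tendsto_Lim by metis
qed

lemma ufree_Lim_eq:
  fixes h :: "'a \<Rightarrow> real"
  assumes "ufree U" "(h \<longlongrightarrow> l) U" shows "Lim U h = l"
  using assms ufree_nonbot tendsto_Lim by metis

section \<open>ell-infinity basics\<close>

lemma continuous_on_discrete: "continuous_on S (h :: 'a discrete \<Rightarrow> 'b::topological_space)"
  unfolding continuous_on_open_invariant using open_discrete by auto

definition mk :: "('g discrete \<Rightarrow> real) \<Rightarrow> 'g linf" where
  "mk h = Bcontfun h"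

lemma mk_apply:
  assumes "\<And>x. \<bar>h x\<bar> \<le> B"
  shows "apply_bcontfun (mk h) = h"
proof -
  have "h \<in> bcontfun" by (rule bcontfun_normI[OF continuous_on_discrete]) (use assms in simp)
  then show ?thesis unfolding mk_def by (simp add: Bcontfun_inverse)
qed

lemma abs_apply_le: "\<bar>apply_bcontfun (f::'g linf) x\<bar> \<le> norm f"
  using norm_bounded[of f x] by simp

lemma norm_linf_le:
  assumes "\<And>x. \<bar>apply_bcontfun (f::'g linf) x\<bar> \<le> B"
  shows "norm f \<le> B"
  using norm_bound[of f B] assms by simp

lemma bounded_linf: "bounded (range (apply_bcontfun (f::'g linf)))"
  by simp

lemma c0_iff: "f \<in> c0 \<longleftrightarrow> (\<forall>e>0. finite {x. e \<le> \<bar>apply_bcontfun f x\<bar>})"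
  unfolding c0_def by simp

lemma c0_add:
  assumes "f \<in> c0" "g \<in> c0" shows "f + g \<in> c0"
  unfolding c0_iff
proof (intro allI impI)
  fix e :: real assume e: "e > 0"
  have sub: "{x. e \<le> \<bar>apply_bcontfun (f + g) x\<bar>} \<subseteq>
      {x. e/2 \<le> \<bar>apply_bcontfun f x\<bar>} \<union> {x. e/2 \<le> \<bar>apply_bcontfun g x\<bar>}"
    by auto
  have e2: "e/2 > 0" using e by simp
  moreover have "finite {x. e/2 \<le> \<bar>apply_bcontfun f x\<bar>}" using assms(1) e2 unfolding c0_iff by blast
  moreover have "finite {x. e/2 \<le> \<bar>apply_bcontfun g x\<bar>}" using assms(2) e2 unfolding c0_iff by blast
  ultimately show "finite {x. e \<le> \<bar>apply_bcontfun (f + g) x\<bar>}"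
    using sub by (meson finite_UnI finite_subset)
qed

lemma c0_scale:
  assumes "f \<in> c0" shows "c *\<^sub>R f \<in> c0"
proof (cases "c = 0")
  case True
  then show ?thesis unfolding c0_iff by simp
next
  case False
  show ?thesis unfolding c0_iff
  proof (intro allI impI)
    fix e :: real assume e: "e > 0"
    have "{x. e \<le> \<bar>apply_bcontfun (c *\<^sub>R f) x\<bar>} = {x. e / \<bar>c\<bar> \<le> \<bar>apply_bcontfun f x\<bar>}"
      using False by (auto simp: abs_mult field_simps)
    moreover have "finite {x. e / \<bar>c\<bar> \<le> \<bar>apply_bcontfun f x\<bar>}"
      using assms e False unfolding c0_iff by simp
    ultimately show "finite {x. e \<le> \<bar>apply_bcontfun (c *\<^sub>R f) x\<bar>}" by simp
  qed
qed

lemma c0_finite_support: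
  assumes "finite {x. apply_bcontfun f x \<noteq> 0}" shows "f \<in> c0"
  unfolding c0_iff
proof (intro allI impI)
  fix e :: real assume "e > 0"
  then have "{x. e \<le> \<bar>apply_bcontfun f x\<bar>} \<subseteq> {x. apply_bcontfun f x \<noteq> 0}" by auto
  then show "finite {x. e \<le> \<bar>apply_bcontfun f x\<bar>}" using assms finite_subset by blast
qed

definition ulim :: "'a filter \<Rightarrow> ('a \<Rightarrow> real) \<Rightarrow> real" where
  "ulim U h = Lim U h"

lemma ulim_tendsto:
  assumes "ufree U" shows "(apply_bcontfun (f::'g linf) \<longlongrightarrow> ulim U (apply_bcontfun f)) U"
  unfolding ulim_def by (rule ufree_tendsto[OF assms bounded_linf])

lemma ulim_add:
  assumes "ufree U"
  shows "ulim U (apply_bcontfun (f + g)) = ulim U (apply_bcontfun f) + ulim U (apply_bcontfun (g::'g linf))"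
proof -
  have "((\<lambda>x. apply_bcontfun f x + apply_bcontfun g x) \<longlongrightarrow> ulim U (apply_bcontfun f) + ulim U (apply_bcontfun g)) U"
    by (intro tendsto_add ulim_tendsto assms)
  then have "(apply_bcontfun (f + g) \<longlongrightarrow> ulim U (apply_bcontfun f) + ulim U (apply_bcontfun g)) U"
    by simp
  then show ?thesis unfolding ulim_def by (rule ufree_Lim_eq[OF assms])
qed

lemma ulim_scale:
  assumes "ufree U"
  shows "ulim U (apply_bcontfun (c *\<^sub>R f)) = c * ulim U (apply_bcontfun (f::'g linf))"
proof -
  have "((\<lambda>x. c * apply_bcontfun f x) \<longlongrightarrow> c * ulim U (apply_bcontfun f)) U"
    by (intro tendsto_mult tendsto_const ulim_tendsto assms)
  then have "(apply_bcontfun (c *\<^sub>R f) \<longlongrightarrow> c * ulim U (apply_bcontfun f)) U"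
    by simp
  then show ?thesis unfolding ulim_def by (rule ufree_Lim_eq[OF assms])
qed

lemma ulim_c0:
  assumes "ufree U" "f \<in> c0"
  shows "ulim U (apply_bcontfun (f::'g linf)) = 0"
proof -
  have "(apply_bcontfun f \<longlongrightarrow> 0) U"
  proof (rule tendstoI)
    fix e :: real assume e: "e > 0"
    have "finite {x. e \<le> \<bar>apply_bcontfun f x\<bar>}" using assms(2) e unfolding c0_iff by simp
    then have "eventually (\<lambda>x. x \<notin> {x. e \<le> \<bar>apply_bcontfun f x\<bar>}) U"
      by (rule ufree_finite[OF assms(1)])
    then show "eventually (\<lambda>x. dist (apply_bcontfun f x) 0 < e) U"
      by (rule eventually_mono) auto
  qed
  then show ?thesis unfolding ulim_def by (rule ufree_Lim_eq[OF assms(1)])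
qed

lemma ulim_le:
  assumes U: "ufree U" and ev: "eventually (\<lambda>x. x \<in> A) U"
    and bd: "\<And>x. x \<in> A \<Longrightarrow> \<bar>apply_bcontfun (f::'g linf) x - c\<bar> \<le> r"
  shows "\<bar>ulim U (apply_bcontfun f) - c\<bar> \<le> r"
proof -
  have "((\<lambda>x. \<bar>apply_bcontfun f x - c\<bar>) \<longlongrightarrow> \<bar>ulim U (apply_bcontfun f) - c\<bar>) U"
    by (intro tendsto_intros ulim_tendsto U)
  moreover have "eventually (\<lambda>x. \<bar>apply_bcontfun f x - c\<bar> \<le> r) U"
    using ev by (rule eventually_mono) (use bd in auto)
  ultimately show ?thesis using tendsto_upperbound ufree_nonbot[OF U] by blast
qed

lemma ulim_norm:
  assumes U: "ufree U"
  shows "\<bar>ulim U (apply_bcontfun (f::'g linf))\<bar> \<le> norm f"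
  using ulim_le[OF U, of UNIV f 0 "norm f"] abs_apply_le[of f] by simp



locale quot =
  fixes \<pi> :: "'g linf \<Rightarrow> 'q::banach"
  assumes bl: "bounded_linear \<pi>"
    and sj: "surj \<pi>"
    and ker: "{f. \<pi> f = 0} = c0"
    and nrm: "\<forall>q. norm q = (INF f\<in>{f. \<pi> f = q}. norm f)"
begin

lemma lin: "linear \<pi>" using bl bounded_linear.linear by blast

lemma pi_add: "\<pi> (f + g) = \<pi> f + \<pi> g" using lin by (simp add: linear_add)
lemma pi_diff: "\<pi> (f - g) = \<pi> f - \<pi> g" using lin by (simp add: linear_diff)
lemma pi_scale: "\<pi> (c *\<^sub>R f) = c *\<^sub>R \<pi> f" using lin by (simp add: linear_scale)

lemma pi_zero_iff: "\<pi> f = 0 \<longleftrightarrow> f \<in> c0" using ker by blast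

lemma pi_eq_iff: "\<pi> f = \<pi> g \<longleftrightarrow> f - g \<in> c0"
  using pi_zero_iff[of "f - g"] pi_diff by simp

lemma norm_pi_le: "norm (\<pi> f) \<le> norm f"
proof -
  have "norm (\<pi> f) = (INF h\<in>{h. \<pi> h = \<pi> f}. norm h)" using nrm by blast
  also have "\<dots> \<le> norm f"
    by (rule cINF_lower) (auto intro: bdd_belowI[of _ 0])
  finally show ?thesis .
qed

lemma norm_pi_ge:
  assumes "\<And>g. \<pi> g = q \<Longrightarrow> c \<le> norm g" shows "c \<le> norm q"
proof -
  obtain f0 where "q = \<pi> f0" using surjD[OF sj, of q] by blast
  then have ne: "{h. \<pi> h = q} \<noteq> {}" by blast
  have "c \<le> (INF h\<in>{h. \<pi> h = q}. norm h)"
    by (rule cINF_greatest[OF ne]) (use assms in auto)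
  moreover have "norm q = (INF h\<in>{h. \<pi> h = q}. norm h)" using nrm by blast
  ultimately show ?thesis by simp
qed

lemma small_finite:
  assumes "norm (\<pi> h) < r"
  shows "finite {x. r \<le> \<bar>apply_bcontfun h x\<bar>}"
proof -
  have "\<not> (\<forall>g. \<pi> g = \<pi> h \<longrightarrow> r \<le> norm g)"
  proof
    assume "\<forall>g. \<pi> g = \<pi> h \<longrightarrow> r \<le> norm g"
    then have "r \<le> norm (\<pi> h)" by (intro norm_pi_ge) auto
    with assms show False by simp
  qed
  then obtain g where g: "\<pi> g = \<pi> h" "\<not> r \<le> norm g" by blast
  have c: "h - g \<in> c0" using g(1)[symmetric] pi_eq_iff[of h g] by simp
  define d where "d = r - norm g"
  have d: "d > 0" using g(2) unfolding d_def by simp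
  have "{x. r \<le> \<bar>apply_bcontfun h x\<bar>} \<subseteq> {x. d \<le> \<bar>apply_bcontfun (h - g) x\<bar>}"
  proof
    fix x assume "x \<in> {x. r \<le> \<bar>apply_bcontfun h x\<bar>}"
    then have "r \<le> \<bar>apply_bcontfun h x\<bar>" by simp
    moreover have "\<bar>apply_bcontfun g x\<bar> \<le> norm g" by (rule abs_apply_le)
    ultimately show "x \<in> {x. d \<le> \<bar>apply_bcontfun (h - g) x\<bar>}" unfolding d_def by auto
  qed
  moreover have "finite {x. d \<le> \<bar>apply_bcontfun (h - g) x\<bar>}" using c d unfolding c0_iff by blast
  ultimately show ?thesis using finite_subset by blast
qed

lemma ulim_cong:
  assumes U: "ufree U" and "\<pi> f = \<pi> g"
  shows "ulim U (apply_bcontfun f) = ulim U (apply_bcontfun g)"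
proof -
  have "f - g \<in> c0" using assms(2) pi_eq_iff[of f g] by simp
  then have "ulim U (apply_bcontfun (f - g)) = 0" by (rule ulim_c0[OF U])
  moreover have "ulim U (apply_bcontfun (g + (f - g))) = ulim U (apply_bcontfun g) + ulim U (apply_bcontfun (f - g))"
    by (rule ulim_add[OF U])
  ultimately show ?thesis by simp
qed

lemma ulim_pi:
  assumes U: "ufree U"
  shows "\<bar>ulim U (apply_bcontfun f)\<bar> \<le> norm (\<pi> f)"
proof (rule norm_pi_ge)
  fix g assume "\<pi> g = \<pi> f"
  then have "ulim U (apply_bcontfun f) = ulim U (apply_bcontfun g)" using ulim_cong[OF U, of f g] by simp
  then show "\<bar>ulim U (apply_bcontfun f)\<bar> \<le> norm g" using ulim_norm[OF U, of g] by simp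
qed

definition L :: "'q \<Rightarrow> 'g linf" where "L q = (SOME f. \<pi> f = q)"

lemma pi_L: "\<pi> (L q) = q"
proof -
  have "\<exists>f. \<pi> f = q" using surjD[OF sj, of q] by auto
  then show ?thesis unfolding L_def by (rule someI_ex)
qed

end



locale cq = quot \<pi> for \<pi> :: "'g linf \<Rightarrow> 'q::banach" +
  fixes T :: "'z::banach \<Rightarrow> 'q"
  assumes inf: "infinite (UNIV :: 'g discrete set)"
    and Tc: "compact_operator T"
begin

lemma Tbl: "bounded_linear T" using Tc unfolding compact_operator_def by blast
lemma Tcomp: "compact (closure (T ` ball 0 1))" using Tc unfolding compact_operator_def by blast
lemma Tlin: "linear T" using Tbl bounded_linear.linear by blast
lemma T_add: "T (x + y) = T x + T y" using Tlin by (simp add: linear_add)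
lemma T_diff: "T (x - y) = T x - T y" using Tlin by (simp add: linear_diff)
lemma T_scale: "T (c *\<^sub>R x) = c *\<^sub>R T x" using Tlin by (simp add: linear_scale)

lemma net_ex:
  assumes e: "e > 0"
  shows "\<exists>N. finite N \<and> N \<subseteq> ball 0 1 \<and> (\<forall>z\<in>ball 0 1. \<exists>w\<in>N. norm (T z - T w) < e)"
proof -
  have cov: "closure (T ` ball 0 1) \<subseteq> (\<Union>z\<in>ball 0 1. ball (T z) e)"
  proof
    fix y assume yin: "y \<in> closure (T ` ball 0 1)"
    obtain u where u: "u \<in> T ` ball 0 1" "dist y u < e"
      using closure_approachableD[OF yin e] by blast
    then obtain z where z: "z \<in> ball 0 1" "u = T z" by blast
    have "y \<in> ball (T z) e" using u(2) z(2) by (simp add: dist_commute)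
    then show "y \<in> (\<Union>z\<in>ball 0 1. ball (T z) e)" using z(1) by blast
  qed
  have opn: "\<And>z. z \<in> ball 0 1 \<Longrightarrow> open (ball (T z) e)" by simp
  obtain N where N: "N \<subseteq> ball 0 1" "finite N" "closure (T ` ball 0 1) \<subseteq> (\<Union>z\<in>N. ball (T z) e)"
    by (rule compactE_image[OF Tcomp opn cov])
  have "\<forall>z\<in>ball 0 1. \<exists>w\<in>N. norm (T z - T w) < e"
  proof
    fix z assume z: "z \<in> ball (0::'z) 1"
    then have "T z \<in> T ` ball 0 1" by (rule imageI)
    then have "T z \<in> closure (T ` ball 0 1)" by (rule subsetD[OF closure_subset])
    then obtain w where "w \<in> N" "T z \<in> ball (T w) e" using N(3) by blast
    then have "norm (T z - T w) < e" by (simp add: dist_norm norm_minus_commute)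
    then show "\<exists>w\<in>N. norm (T z - T w) < e" using \<open>w \<in> N\<close> by blast
  qed
  then show ?thesis using N(1,2) by (intro exI[of _ N]) simp
qed

definition N :: "nat \<Rightarrow> 'z set" where
  "N n = (SOME N. finite N \<and> N \<subseteq> ball 0 1 \<and> (\<forall>z\<in>ball 0 1. \<exists>w\<in>N. norm (T z - T w) < 1 / real (Suc n)))"

lemma N_props:
  "finite (N n) \<and> N n \<subseteq> ball 0 1 \<and> (\<forall>z\<in>ball 0 1. \<exists>w\<in>N n. norm (T z - T w) < 1 / real (Suc n))"
proof -
  have "(1::real) / real (Suc n) > 0" by simp
  from net_ex[OF this] show ?thesis unfolding N_def by (rule someI_ex)
qed

lemma N_fin: "finite (N n)" using N_props by blast
lemma N_approx: "z \<in> ball 0 1 \<Longrightarrow> \<exists>w\<in>N n. norm (T z - T w) < 1 / real (Suc n)"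
  using N_props by blast

definition F :: "'z \<Rightarrow> 'g discrete \<Rightarrow> real" where
  "F z = apply_bcontfun (L (T z))"

definition Cs :: "nat \<Rightarrow> 'g discrete \<Rightarrow> 'g discrete set" where
  "Cs n \<gamma> = {\<delta>. \<forall>w\<in>N n. \<bar>F w \<delta> - F w \<gamma>\<bar> \<le> 1 / real (Suc n)}"

definition I :: "nat \<Rightarrow> 'g discrete \<Rightarrow> 'g discrete set" where
  "I k \<gamma> = (\<Inter>j\<in>{..k}. Cs j \<gamma>)"

definition D :: "nat \<Rightarrow> 'g discrete set" where
  "D n = {\<gamma>. finite (I n \<gamma>)}"

lemma fipC: "fip ((\<lambda>k. Cs k \<gamma>) ` {k. infinite (I k \<gamma>)})"
  unfolding fip_def
proof (intro allI impI)
  fix G assume G: "G \<subseteq> (\<lambda>k. Cs k \<gamma>) ` {k. infinite (I k \<gamma>)}" "finite G"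
  obtain K where K: "K \<subseteq> {k. infinite (I k \<gamma>)}" "finite K" "G = (\<lambda>k. Cs k \<gamma>) ` K"
    using finite_subset_image[OF G(2) G(1)] by blast
  show "infinite (\<Inter>G)"
  proof (cases "K = {}")
    case True
    then show ?thesis using K(3) inf by simp
  next
    case False
    define m where "m = Max K"
    have mK: "m \<in> K" unfolding m_def using K(2) False by simp
    have le: "k \<le> m" if "k \<in> K" for k unfolding m_def using K(2) that by simp
    have "I m \<gamma> \<subseteq> \<Inter>G"
    proof
      fix \<delta> assume d: "\<delta> \<in> I m \<gamma>"
      show "\<delta> \<in> \<Inter>G"
      proof
        fix X assume "X \<in> G"
        then obtain k where k: "k \<in> K" "X = Cs k \<gamma>" using K(3) by blast
        then show "\<delta> \<in> X" using d le[OF k(1)] unfolding I_def by auto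
      qed
    qed
    moreover have "infinite (I m \<gamma>)" using mK K(1) by blast
    ultimately show ?thesis using finite_subset by blast
  qed
qed

lemma U_ex: "\<exists>V. ufree V \<and> (\<forall>k. infinite (I k \<gamma>) \<longrightarrow> eventually (\<lambda>x. x \<in> Cs k \<gamma>) V)"
proof -
  obtain V where V: "ufree V" "\<forall>A\<in>(\<lambda>k. Cs k \<gamma>) ` {k. infinite (I k \<gamma>)}. eventually (\<lambda>x. x \<in> A) V"
    using ufree_exists[OF inf fipC] by blast
  show ?thesis by (rule exI[of _ V]) (use V in auto)
qed

definition Uf :: "'g discrete \<Rightarrow> 'g discrete filter" where
  "Uf \<gamma> = (SOME V. ufree V \<and> (\<forall>k. infinite (I k \<gamma>) \<longrightarrow> eventually (\<lambda>x. x \<in> Cs k \<gamma>) V))"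

lemma Uf_props: "ufree (Uf \<gamma>) \<and> (\<forall>k. infinite (I k \<gamma>) \<longrightarrow> eventually (\<lambda>x. x \<in> Cs k \<gamma>) (Uf \<gamma>))"
  unfolding Uf_def using U_ex by (rule someI_ex)

lemma Uf_free: "ufree (Uf \<gamma>)" using Uf_props by blast
lemma Uf_ev: "infinite (I k \<gamma>) \<Longrightarrow> eventually (\<lambda>x. x \<in> Cs k \<gamma>) (Uf \<gamma>)" using Uf_props by blast

lemma D_finite: "finite (D n)"
proof (rule ccontr)
  assume nf: "infinite (D n)"
  have "fip {D n}"
    unfolding fip_def
  proof (intro allI impI)
    fix G assume "G \<subseteq> {D n}" "finite G"
    then have "G = {} \<or> G = {D n}" by blast
    then show "infinite (\<Inter>G)" using nf inf by auto
  qed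
  then obtain V where V: "ufree V" "eventually (\<lambda>x. x \<in> D n) V"
    using ufree_exists[OF inf] by blast
  define l where "l w = ulim V (F w)" for w
  define P where "P \<delta> = (\<forall>k\<in>{..n}. \<forall>w\<in>N k. \<bar>F w \<delta> - l w\<bar> < 1 / (2 * real (Suc k)))" for \<delta>
  have evP: "eventually P V"
    unfolding P_def
  proof (rule eventually_ball_finite, simp, intro ballI)
    fix k assume "k \<in> {..n}"
    show "eventually (\<lambda>\<delta>. \<forall>w\<in>N k. \<bar>F w \<delta> - l w\<bar> < 1 / (2 * real (Suc k))) V"
    proof (rule eventually_ball_finite[OF N_fin], intro ballI)
      fix w assume "w \<in> N k"
      have t: "(apply_bcontfun (L (T w)) \<longlongrightarrow> l w) V"
        unfolding l_def F_def by (rule ulim_tendsto[OF V(1)])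
      have "(1::real) / (2 * real (Suc k)) > 0" by simp
      from tendstoD[OF t this] show "eventually (\<lambda>\<delta>. \<bar>F w \<delta> - l w\<bar> < 1 / (2 * real (Suc k))) V"
        by (simp add: F_def dist_real_def)
    qed
  qed
  have "eventually (\<lambda>x. x \<in> D n \<and> P x) V" using V(2) evP by (rule eventually_conj)
  then have "infinite {x. x \<in> D n \<and> P x}" by (rule ufree_infinite[OF V(1)])
  then obtain \<gamma> where g: "\<gamma> \<in> D n" "P \<gamma>" by (metis (mono_tags, lifting) empty_Collect_eq finite.emptyI)
  have "{x. P x} \<subseteq> I n \<gamma>"
  proof
    fix \<delta> assume "\<delta> \<in> {x. P x}"
    then have d: "P \<delta>" by simp
    show "\<delta> \<in> I n \<gamma>"
      unfolding I_def
    proof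
      fix j assume j: "j \<in> {..n}"
      show "\<delta> \<in> Cs j \<gamma>"
        unfolding Cs_def
      proof (intro CollectI ballI)
        fix w assume w: "w \<in> N j"
        have a: "\<bar>F w \<delta> - l w\<bar> < 1 / (2 * real (Suc j))" using d j w unfolding P_def by blast
        have b: "\<bar>F w \<gamma> - l w\<bar> < 1 / (2 * real (Suc j))" using g(2) j w unfolding P_def by blast
        have "\<bar>F w \<delta> - F w \<gamma>\<bar> < 1 / (2 * real (Suc j)) + 1 / (2 * real (Suc j))"
          using a b by linarith
        also have "\<dots> = 1 / real (Suc j)" by (simp add: field_simps)
        finally show "\<bar>F w \<delta> - F w \<gamma>\<bar> \<le> 1 / real (Suc j)" by simp
      qed
    qed
  qed
  moreover have "infinite {x. P x}" using ufree_infinite[OF V(1) evP] .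
  ultimately have "infinite (I n \<gamma>)" using finite_subset by blast
  then show False using g(1) unfolding D_def by simp
qed

end



context cq begin

lemma F_bound: "\<bar>ulim (Uf \<gamma>) (F z)\<bar> \<le> norm (T z)"
  using ulim_pi[OF Uf_free, of \<gamma> "L (T z)"] pi_L unfolding F_def by simp

definition S :: "'z \<Rightarrow> 'g linf" where
  "S z = mk (\<lambda>\<gamma>. ulim (Uf \<gamma>) (F z))"

lemma S_apply: "apply_bcontfun (S z) \<gamma> = ulim (Uf \<gamma>) (F z)"
  unfolding S_def by (subst mk_apply[OF F_bound]) (rule refl)

lemma S_norm: "norm (S z) \<le> norm (T z)"
  by (rule norm_linf_le) (simp add: S_apply F_bound)

lemma S_add: "S (x + y) = S x + S y"
proof (rule bcontfun_eqI)
  fix \<gamma>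
  have "\<pi> (L (T (x + y))) = \<pi> (L (T x) + L (T y))" by (simp add: pi_L pi_add T_add)
  then have "ulim (Uf \<gamma>) (F (x + y)) = ulim (Uf \<gamma>) (apply_bcontfun (L (T x) + L (T y)))"
    unfolding F_def by (rule ulim_cong[OF Uf_free])
  also have "\<dots> = ulim (Uf \<gamma>) (F x) + ulim (Uf \<gamma>) (F y)"
    unfolding F_def by (rule ulim_add[OF Uf_free])
  finally show "apply_bcontfun (S (x + y)) \<gamma> = apply_bcontfun (S x + S y) \<gamma>"
    by (simp add: S_apply)
qed

lemma S_scale: "S (c *\<^sub>R x) = c *\<^sub>R S x"
proof (rule bcontfun_eqI)
  fix \<gamma>
  have "\<pi> (L (T (c *\<^sub>R x))) = \<pi> (c *\<^sub>R L (T x))" by (simp add: pi_L pi_scale T_scale)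
  then have "ulim (Uf \<gamma>) (F (c *\<^sub>R x)) = ulim (Uf \<gamma>) (apply_bcontfun (c *\<^sub>R L (T x)))"
    unfolding F_def by (rule ulim_cong[OF Uf_free])
  also have "\<dots> = c * ulim (Uf \<gamma>) (F x)"
    unfolding F_def by (rule ulim_scale[OF Uf_free])
  finally show "apply_bcontfun (S (c *\<^sub>R x)) \<gamma> = apply_bcontfun (c *\<^sub>R S x) \<gamma>"
    by (simp add: S_apply)
qed

lemma S_diff: "S (x - y) = S x - S y"
proof -
  have "S x = S ((x - y) + y)" by simp
  also have "\<dots> = S (x - y) + S y" by (rule S_add)
  finally show ?thesis by simp
qed

lemma S_bl: "bounded_linear S"
proof (rule bounded_linear_intro[where K = "onorm T"])
  show "S (x + y) = S x + S y" for x y by (rule S_add)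
  show "S (c *\<^sub>R x) = c *\<^sub>R S x" for c x by (rule S_scale)
  show "norm (S x) \<le> norm x * onorm T" for x
    using S_norm[of x] onorm[OF Tbl, of x] by (simp add: mult.commute)
qed

lemma S_c0_ball:
  assumes z: "z \<in> ball 0 1"
  shows "S z - L (T z) \<in> c0"
  unfolding c0_iff
proof (intro allI impI)
  fix e :: real assume e: "e > 0"
  obtain n where n: "inverse (real (Suc n)) < e / 3"
    using reals_Archimedean[of "e/3"] e by auto
  define r where "r = 1 / real (Suc n)"
  have r: "r > 0" "3 * r < e" using n unfolding r_def by (auto simp: field_simps)
  obtain w where w: "w \<in> N n" "norm (T z - T w) < r"
    using N_approx[OF z, of n] unfolding r_def by blast
  define h where "h = L (T z) - L (T w)"
  have ph: "\<pi> h = T z - T w" unfolding h_def by (simp add: pi_diff pi_L)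
  have E: "finite {x. r \<le> \<bar>apply_bcontfun h x\<bar>}"
    by (rule small_finite) (simp add: ph w(2))
  have sub: "{x. e \<le> \<bar>apply_bcontfun (S z - L (T z)) x\<bar>} \<subseteq> D n \<union> {x. r \<le> \<bar>apply_bcontfun h x\<bar>}"
  proof
    fix \<gamma> assume g: "\<gamma> \<in> {x. e \<le> \<bar>apply_bcontfun (S z - L (T z)) x\<bar>}"
    show "\<gamma> \<in> D n \<union> {x. r \<le> \<bar>apply_bcontfun h x\<bar>}"
    proof (rule ccontr)
      assume "\<gamma> \<notin> D n \<union> {x. r \<le> \<bar>apply_bcontfun h x\<bar>}"
      then have g1: "infinite (I n \<gamma>)" and g2: "\<bar>apply_bcontfun h \<gamma>\<bar> < r"
        unfolding D_def by auto
      have U: "ufree (Uf \<gamma>)" by (rule Uf_free)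
      have evC: "eventually (\<lambda>x. x \<in> Cs n \<gamma>) (Uf \<gamma>)" by (rule Uf_ev[OF g1])
      have "\<pi> (L (T z)) = \<pi> (h + L (T w))" by (simp add: ph pi_add pi_L)
      then have "ulim (Uf \<gamma>) (F z) = ulim (Uf \<gamma>) (apply_bcontfun (h + L (T w)))"
        unfolding F_def by (rule ulim_cong[OF U])
      also have "\<dots> = ulim (Uf \<gamma>) (apply_bcontfun h) + ulim (Uf \<gamma>) (F w)"
        unfolding F_def by (rule ulim_add[OF U])
      finally have a1: "ulim (Uf \<gamma>) (F z) = ulim (Uf \<gamma>) (apply_bcontfun h) + ulim (Uf \<gamma>) (F w)" .
      have a2: "\<bar>ulim (Uf \<gamma>) (apply_bcontfun h)\<bar> < r"
        using ulim_pi[OF U, of h] ph w(2) by simp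
      have a3: "\<bar>ulim (Uf \<gamma>) (F w) - F w \<gamma>\<bar> \<le> r"
        unfolding F_def
      proof (rule ulim_le[OF U evC])
        fix x assume "x \<in> Cs n \<gamma>"
        then show "\<bar>apply_bcontfun (L (T w)) x - apply_bcontfun (L (T w)) \<gamma>\<bar> \<le> r"
          using w(1) unfolding Cs_def r_def F_def by blast
      qed
      have a4: "F z \<gamma> = apply_bcontfun h \<gamma> + F w \<gamma>" unfolding F_def h_def by simp
      have "apply_bcontfun (S z - L (T z)) \<gamma> = ulim (Uf \<gamma>) (F z) - F z \<gamma>"
        by (simp add: S_apply F_def)
      also have "\<dots> = ulim (Uf \<gamma>) (apply_bcontfun h) + (ulim (Uf \<gamma>) (F w) - F w \<gamma>) - apply_bcontfun h \<gamma>"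
        using a1 a4 by simp
      finally have "\<bar>apply_bcontfun (S z - L (T z)) \<gamma>\<bar> < 3 * r"
        using a2 a3 g2 by linarith
      then show False using g r(2) by simp
    qed
  qed
  have "finite (D n \<union> {x. r \<le> \<bar>apply_bcontfun h x\<bar>})" using D_finite E by simp
  then show "finite {x. e \<le> \<bar>apply_bcontfun (S z - L (T z)) x\<bar>}" using sub finite_subset by blast
qed

lemma S_c0: "S z - L (T z) \<in> c0"
proof -
  define t where "t = norm z + 1"
  have t: "t > 0" unfolding t_def by (simp add: add_nonneg_pos)
  define z' where "z' = (1 / t) *\<^sub>R z"
  have zz: "z = t *\<^sub>R z'" unfolding z'_def using t by simp
  have "norm z' = norm z / t" unfolding z'_def using t by simp
  also have "\<dots> < 1" using t unfolding t_def by (simp add: field_simps)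
  finally have z'b: "z' \<in> ball 0 1" by simp
  have eq: "S z - L (T z) = t *\<^sub>R (S z' - L (T z')) + (t *\<^sub>R L (T z') - L (T z))"
    unfolding zz S_scale by (simp add: algebra_simps)
  have c1: "t *\<^sub>R (S z' - L (T z')) \<in> c0" by (rule c0_scale[OF S_c0_ball[OF z'b]])
  have "\<pi> (t *\<^sub>R L (T z') - L (T z)) = 0"
    unfolding zz by (simp add: pi_diff pi_scale pi_L T_scale)
  then have c2: "t *\<^sub>R L (T z') - L (T z) \<in> c0" using pi_zero_iff by blast
  show ?thesis unfolding eq by (rule c0_add[OF c1 c2])
qed

lemma S_lift: "\<pi> (S z) = T z"
proof -
  have "\<pi> (S z - L (T z)) = 0" using S_c0 pi_zero_iff by blast
  then show ?thesis by (simp add: pi_diff pi_L)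
qed

lemma S_compact: "compact (closure (S ` ball 0 1))"
  unfolding compact_eq_totally_bounded
proof (intro conjI allI impI)
  show "complete (closure (S ` ball 0 1))" by (simp add: complete_eq_closed)
  fix e :: real assume e: "e > 0"
  obtain n where n: "inverse (real (Suc n)) < e / 2"
    using reals_Archimedean[of "e/2"] e by auto
  define r where "r = 1 / real (Suc n)"
  have r: "r < e / 2" using n unfolding r_def by (simp add: inverse_eq_divide)
  have "closure (S ` ball 0 1) \<subseteq> (\<Union>x\<in>S ` N n. ball x e)"
  proof
    fix y assume yin: "y \<in> closure (S ` ball 0 1)"
    have e2: "e / 2 > 0" using e by simp
    obtain u where u: "u \<in> S ` ball 0 1" "dist y u < e / 2"
      using closure_approachableD[OF yin e2] by blast
    then obtain z where z: "z \<in> ball 0 1" "u = S z" by blast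
    obtain w where w: "w \<in> N n" "norm (T z - T w) < r"
      using N_approx[OF z(1), of n] unfolding r_def by blast
    have "dist (S w) (S z) = norm (S (w - z))" by (simp add: dist_norm S_diff)
    also have "\<dots> \<le> norm (T (w - z))" by (rule S_norm)
    also have "\<dots> = norm (T z - T w)" by (simp add: T_diff norm_minus_commute)
    finally have d1: "dist (S w) (S z) < e / 2" using w(2) r by linarith
    have "dist (S w) y \<le> dist (S w) (S z) + dist (S z) y" by (rule dist_triangle)
    also have "dist (S z) y = dist y u" using z(2) by (simp add: dist_commute)
    finally have "dist (S w) y < e" using d1 u(2) by linarith
    then have "y \<in> ball (S w) e" by simp
    moreover have "S w \<in> S ` N n" using w(1) by (rule imageI)
    ultimately show "y \<in> (\<Union>x\<in>S ` N n. ball x e)" by blast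
  qed
  moreover have "finite (S ` N n)" using N_fin by simp
  ultimately show "\<exists>k. finite k \<and> closure (S ` ball 0 1) \<subseteq> (\<Union>x\<in>k. ball x e)" by blast
qed

lemma S_onorm: "onorm S = onorm T"
proof (rule antisym)
  show "onorm S \<le> onorm T"
  proof (rule onorm_bound)
    show "0 \<le> onorm T" by (rule onorm_pos_le[OF Tbl])
    fix x show "norm (S x) \<le> onorm T * norm x" using S_norm[of x] onorm[OF Tbl, of x] by simp
  qed
  show "onorm T \<le> onorm S"
  proof (rule onorm_bound)
    show "0 \<le> onorm S" by (rule onorm_pos_le[OF S_bl])
    fix x
    have "norm (T x) = norm (\<pi> (S x))" by (simp add: S_lift)
    also have "\<dots> \<le> norm (S x)" by (rule norm_pi_le)
    also have "\<dots> \<le> onorm S * norm x" by (rule onorm[OF S_bl])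
    finally show "norm (T x) \<le> onorm S * norm x" .
  qed
qed

lemma cqlp_main: "\<exists>S'. compact_operator S' \<and> \<pi> \<circ> S' = T \<and> onorm S' = onorm T"
proof (intro exI[of _ S] conjI)
  show "compact_operator S" unfolding compact_operator_def using S_bl S_compact by blast
  show "\<pi> \<circ> S = T" by (rule ext) (simp add: S_lift)
  show "onorm S = onorm T" by (rule S_onorm)
qed

end



lemma lin_sum:
  assumes "linear f"
  shows "f (\<Sum>s\<in>G. g s) = (\<Sum>s\<in>G. f (g s))"
proof (cases "finite G")
  case True
  then show ?thesis
  proof (induction G rule: finite_induct)
    case empty then show ?case using assms by (simp add: linear_0)
  next
    case (insert x F) then show ?case using assms by (simp add: linear_add)
  qed
next
  case False then show ?thesis using assms by (simp add: linear_0)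
qed

lemma apply_sum: "apply_bcontfun (\<Sum>s\<in>G. (f s :: 'g linf)) x = (\<Sum>s\<in>G. apply_bcontfun (f s) x)"
proof (cases "finite G")
  case True
  then show ?thesis by (induction G rule: finite_induct) simp_all
next
  case False then show ?thesis by simp
qed

lemma uncountable_bool_seq: "\<not> countable (UNIV :: (nat \<Rightarrow> bool) set)"
proof
  assume c: "countable (UNIV :: (nat \<Rightarrow> bool) set)"
  define f where "f = from_nat_into (UNIV :: (nat \<Rightarrow> bool) set)"
  have r: "range f = UNIV" unfolding f_def using c by simp
  define d where "d n = (\<not> f n n)" for n
  have "d \<in> range f" using r by simp
  then obtain k where "d = f k" by blast
  then have "d k = f k k" by simp
  then show False unfolding d_def by simp
qed

lemma infinite_discrete:
  assumes "infinite (UNIV :: 'g set)" shows "infinite (UNIV :: 'g discrete set)"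
proof
  assume f: "finite (UNIV :: 'g discrete set)"
  have r: "x \<in> range (of_discrete :: 'g discrete \<Rightarrow> 'g)" for x
  proof (rule image_eqI[where x="discrete x"])
    show "x = of_discrete (discrete x)" by (simp add: discrete_inverse)
  qed simp
  then have "(UNIV :: 'g set) = range (of_discrete :: 'g discrete \<Rightarrow> 'g)" by blast
  moreover have "finite (range (of_discrete :: 'g discrete \<Rightarrow> 'g))" using f by (rule finite_imageI)
  ultimately have "finite (UNIV :: 'g set)" by simp
  then show False using assms by simp
qed

context quot begin

lemma no_right_inverse:
  assumes infg: "infinite (UNIV :: 'g discrete set)"
    and Tbl: "bounded_linear (T :: 'q \<Rightarrow> 'g linf)"
    and inv: "\<And>q. \<pi> (T q) = q"
  shows False
proof -
  have Tlin: "linear T" using Tbl bounded_linear.linear by blast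
  obtain e :: "nat \<Rightarrow> 'g discrete" where e: "inj e"
    using infinite_countable_subset[OF infg] by blast
  define code where "code s n = to_nat (map s [0..<n])" for s :: "nat \<Rightarrow> bool" and n
  define A where "A s = range (\<lambda>n. e (code s n))" for s
  define ch where "ch s = mk (indicator (A s) :: 'g discrete \<Rightarrow> real)" for s
  have ch_ap: "apply_bcontfun (ch s) = indicator (A s)" for s
    unfolding ch_def by (rule mk_apply[of _ 1]) (simp add: indicator_def)
  have code_eq: "n = m \<and> (\<forall>i<n. s i = t i)" if "e (code s n) = e (code t m)" for s t n m
  proof -
    have "code s n = code t m" using injD[OF e that] .
    then have l: "map s [0..<n] = map t [0..<m]" unfolding code_def by simp
    then have nm: "n = m" using length_map[of s "[0..<n]"] length_map[of t "[0..<m]"] by simp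
    have "\<forall>i<n. s i = t i"
    proof (intro allI impI)
      fix i assume "i < n"
      then have "map s [0..<n] ! i = s i" "map t [0..<m] ! i = t i" using nm by simp_all
      then show "s i = t i" using l by simp
    qed
    then show ?thesis using nm by simp
  qed
  have A_inf: "infinite (A s)" for s
  proof
    assume "finite (A s)"
    moreover have "inj (\<lambda>n. e (code s n))"
      by (rule injI) (use code_eq in blast)
    ultimately have "finite (UNIV :: nat set)" unfolding A_def using finite_imageD by blast
    then show False by simp
  qed
  have A_int: "finite (A s \<inter> A t)" if "s \<noteq> t" for s t
  proof -
    obtain k where k: "s k \<noteq> t k" using \<open>s \<noteq> t\<close> by blast
    have "A s \<inter> A t \<subseteq> (\<lambda>n. e (code s n)) ` {..k}"
    proof
      fix x assume "x \<in> A s \<inter> A t"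
      then obtain n m where x: "x = e (code s n)" "x = e (code t m)" unfolding A_def by blast
      then have "n = m \<and> (\<forall>i<n. s i = t i)" using code_eq by metis
      then have "n \<le> k" using k not_less by blast
      then show "x \<in> (\<lambda>n. e (code s n)) ` {..k}" using x(1) by simp
    qed
    then show ?thesis using finite_subset by blast
  qed
  define a where "a s y = apply_bcontfun (T (\<pi> (ch s))) y" for s y
  have fin_big: "finite {s. r \<le> \<bar>a s y\<bar>}" if r: "r > 0" for r y
  proof (rule ccontr)
    assume nf: "infinite {s. r \<le> \<bar>a s y\<bar>}"
    define K where "K = nat \<lceil>onorm T / r\<rceil> + 1"
    obtain G where G: "finite G" "card G = K" "G \<subseteq> {s. r \<le> \<bar>a s y\<bar>}"
      using infinite_arbitrarily_large[OF nf] by blast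
    define v where "v = (\<Sum>s\<in>G. sgn (a s y) *\<^sub>R ch s)"
    have vx: "apply_bcontfun v x = (\<Sum>s\<in>G. sgn (a s y) * indicator (A s) x)" for x
      unfolding v_def apply_sum by (simp add: ch_ap)
    define g where "g = mk (\<lambda>x. max (-1) (min 1 (apply_bcontfun v x)))"
    have gx: "apply_bcontfun g = (\<lambda>x. max (-1) (min 1 (apply_bcontfun v x)))"
      unfolding g_def by (rule mk_apply[of _ 1]) auto
    have ng: "norm g \<le> 1" by (rule norm_linf_le) (simp add: gx)
    define P where "P = {(s, t). s \<in> G \<and> t \<in> G \<and> s \<noteq> t}"
    have "P \<subseteq> G \<times> G" unfolding P_def by auto
    then have Pfin: "finite P" by (rule finite_subset) (simp add: G(1))
    have supp: "{x. apply_bcontfun (v - g) x \<noteq> 0} \<subseteq> (\<Union>p\<in>P. A (fst p) \<inter> A (snd p))"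
    proof
      fix x assume xin: "x \<in> {x. apply_bcontfun (v - g) x \<noteq> 0}"
      show "x \<in> (\<Union>p\<in>P. A (fst p) \<inter> A (snd p))"
      proof (rule ccontr)
        assume nx: "x \<notin> (\<Union>p\<in>P. A (fst p) \<inter> A (snd p))"
        have uniq: "s = t" if "s \<in> G" "t \<in> G" "x \<in> A s" "x \<in> A t" for s t
        proof (rule ccontr)
          assume "s \<noteq> t"
          then have "(s, t) \<in> P" unfolding P_def using that by simp
          then show False using nx that by force
        qed
        have "\<bar>apply_bcontfun v x\<bar> \<le> 1"
        proof (cases "\<exists>s0\<in>G. x \<in> A s0")
          case False
          then have "apply_bcontfun v x = 0" unfolding vx by (intro sum.neutral) (simp add: indicator_def)
          then show ?thesis by simp
        next
          case True
          then obtain s0 where s0: "s0 \<in> G" "x \<in> A s0" by blast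
          have "apply_bcontfun v x = sgn (a s0 y) * indicator (A s0) x + (\<Sum>s\<in>G - {s0}. sgn (a s y) * indicator (A s) x)"
            unfolding vx using G(1) s0(1) by (rule sum.remove)
          also have "(\<Sum>s\<in>G - {s0}. sgn (a s y) * indicator (A s) x) = 0"
          proof (rule sum.neutral, intro ballI)
            fix s assume s: "s \<in> G - {s0}"
            then have "x \<notin> A s" using uniq[of s s0] s0 by blast
            then show "sgn (a s y) * indicator (A s) x = 0" by simp
          qed
          finally have "apply_bcontfun v x = sgn (a s0 y)" using s0(2) by simp
          then show ?thesis by (simp add: abs_sgn_eq)
        qed
        then have "apply_bcontfun (v - g) x = 0" by (simp add: gx)
        then show False using xin by simp
      qed
    qed
    have "finite (\<Union>p\<in>P. A (fst p) \<inter> A (snd p))"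
    proof (rule finite_UN_I[OF Pfin])
      fix p assume "p \<in> P"
      then have "fst p \<noteq> snd p" unfolding P_def by auto
      then show "finite (A (fst p) \<inter> A (snd p))" by (rule A_int)
    qed
    then have "v - g \<in> c0" using supp finite_subset c0_finite_support by blast
    then have "\<pi> v = \<pi> g" using pi_eq_iff by blast
    then have npv: "norm (\<pi> v) \<le> 1" using norm_pi_le[of g] ng by simp
    have "T (\<pi> v) = (\<Sum>s\<in>G. sgn (a s y) *\<^sub>R T (\<pi> (ch s)))"
      unfolding v_def lin_sum[OF lin] lin_sum[OF Tlin] by (simp add: pi_scale linear_scale[OF Tlin])
    then have "apply_bcontfun (T (\<pi> v)) y = (\<Sum>s\<in>G. sgn (a s y) * a s y)"
      by (simp add: apply_sum a_def)
    also have "\<dots> = (\<Sum>s\<in>G. \<bar>a s y\<bar>)" by (simp add: abs_sgn mult.commute)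
    finally have eqs: "apply_bcontfun (T (\<pi> v)) y = (\<Sum>s\<in>G. \<bar>a s y\<bar>)" .
    have "(\<Sum>s\<in>G. \<bar>a s y\<bar>) \<le> norm (T (\<pi> v))" using abs_apply_le[of "T (\<pi> v)" y] eqs by simp
    also have "\<dots> \<le> onorm T * norm (\<pi> v)" by (rule onorm[OF Tbl])
    also have "\<dots> \<le> onorm T * 1" using npv onorm_pos_le[OF Tbl] by (intro mult_left_mono) auto
    finally have up: "(\<Sum>s\<in>G. \<bar>a s y\<bar>) \<le> onorm T" by simp
    have lo: "real (card G) * r \<le> (\<Sum>s\<in>G. \<bar>a s y\<bar>)"
      by (rule sum_bounded_below) (use G(3) in auto)
    have "onorm T / r < real K" unfolding K_def by linarith
    then have "onorm T < real K * r" using r by (simp add: field_simps)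
    then show False using up lo G(2) by simp
  qed
  define B where "B = (\<Union>k. \<Union>m. {s. 1 / real (Suc m) \<le> \<bar>a s (e k)\<bar>})"
  have cf: "countable {s. 1 / real (Suc m) \<le> \<bar>a s (e k)\<bar>}" for k m
    by (rule countable_finite[OF fin_big]) simp
  have c1: "countable (\<Union>m. {s. 1 / real (Suc m) \<le> \<bar>a s (e k)\<bar>})" for k
    by (rule countable_UN, simp, rule cf)
  have "countable B" unfolding B_def
    by (rule countable_UN, simp, rule c1)
  then have "B \<noteq> UNIV" using uncountable_bool_seq by metis
  then obtain s where s: "s \<notin> B" by blast
  have z: "a s (e k) = 0" for k
  proof (rule ccontr)
    assume "a s (e k) \<noteq> 0"
    then have "\<bar>a s (e k)\<bar> > 0" by simp
    then obtain m where "inverse (real (Suc m)) < \<bar>a s (e k)\<bar>" using reals_Archimedean by blast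
    then have "s \<in> B" unfolding B_def by (auto simp: inverse_eq_divide intro!: less_imp_le)
    then show False using s by simp
  qed
  define h where "h = T (\<pi> (ch s)) - ch s"
  have "\<pi> h = 0" unfolding h_def by (simp add: pi_diff inv)
  then have hc: "h \<in> c0" using pi_zero_iff by blast
  have "A s \<subseteq> {x. 1/2 \<le> \<bar>apply_bcontfun h x\<bar>}"
  proof
    fix x assume x: "x \<in> A s"
    then obtain n where "x = e (code s n)" unfolding A_def by blast
    then have "apply_bcontfun (T (\<pi> (ch s))) x = 0" using z unfolding a_def by simp
    then have "apply_bcontfun h x = -1" unfolding h_def using x by (simp add: ch_ap)
    then show "x \<in> {x. 1/2 \<le> \<bar>apply_bcontfun h x\<bar>}" by simp
  qed
  moreover have "finite {x. 1/2 \<le> \<bar>apply_bcontfun h x\<bar>}"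
  proof -
    have "(1/2::real) > 0" by simp
    then show ?thesis using hc unfolding c0_iff by blast
  qed
  ultimately show False using A_inf finite_subset by blast
qed

end


lemma cqlp_global:
  fixes \<pi> :: "'g linf \<Rightarrow> 'q::banach" and T :: "'z::banach \<Rightarrow> 'q"
  assumes "quot \<pi>" "infinite (UNIV :: 'g discrete set)" "compact_operator T"
  shows "\<exists>S'. compact_operator S' \<and> \<pi> \<circ> S' = T \<and> onorm S' = onorm T"
proof -
  have "cq \<pi> T" unfolding cq_def cq_axioms_def using assms by blast
  then show ?thesis by (rule cq.cqlp_main)
qed

theorem mainTheorem2:
  fixes \<pi> :: "'g linf \<Rightarrow> 'q::banach"
  assumes "infinite (UNIV :: 'g set)"
    and "bounded_linear \<pi>"
    and "surj \<pi>"
    and "{f. \<pi> f = 0} = c0"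
    and "\<forall>q. norm q = (INF f\<in>{f. \<pi> f = q}. norm f)"
  shows "CQLP TYPE('z::banach) \<pi> \<and> \<not> QLP TYPE('q) \<pi>"
proof -
  have Q: "quot \<pi>" unfolding quot_def using assms(2-5) by blast
  have infd: "infinite (UNIV :: 'g discrete set)" by (rule infinite_discrete[OF assms(1)])
  have c: "CQLP TYPE('z::banach) \<pi>"
    unfolding CQLP_def
  proof (intro allI impI)
    fix T :: "'z \<Rightarrow> 'q" assume "compact_operator T"
    then show "\<exists>S::'z \<Rightarrow> 'g linf. compact_operator S \<and> \<pi> \<circ> S = T \<and> onorm S = onorm T"
      using cqlp_global[OF Q infd] by blast
  qed
  have n: "\<not> QLP TYPE('q) \<pi>"
  proof
    assume "QLP TYPE('q) \<pi>"
    then have "\<exists>T::'q \<Rightarrow> 'g linf. bounded_linear T \<and> \<pi> \<circ> T = (\<lambda>x. x) \<and> onorm T = onorm (\<lambda>x::'q. x)"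
      unfolding QLP_def using bounded_linear_ident by blast
    then obtain T :: "'q \<Rightarrow> 'g linf" where T: "bounded_linear T" "\<pi> \<circ> T = (\<lambda>x. x)" by blast
    have inv: "\<pi> (T q) = q" for q using fun_cong[OF T(2), of q] by simp
    show False by (rule quot.no_right_inverse[OF Q infd T(1) inv])
  qed
  show ?thesis using c n by blast
qed

end
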